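(* Let $G$ be a group, let $p,q\geq 1$ be integers, and let $A\in M_{2p,2q}(\mathbb{C}G)$ be written as a block matrix $$A=\begin{pmatrix} A_{1,1} & A_{1,2}\\ A_{2,1} & A_{2,2}\end{pmatrix}$$ with each block of size $p\times q$. Suppose that $A_{1,1}$ and $A_{2,2}$ both have constant row sum, equal to the same element $r_1\in\mathbb{C}G$, and both have constant column sum, equal to the same element $c_1\in\mathbb{C}G$; and that $A_{1,2}$ and $A_{2,1}$ both have constant row sum, equal to the same element $r_2\in\mathbb{C}G$, and both have constant column sum, equal to the same element $c_2\in\mathbb{C}G$. Then $Q_p A Q_q = A$, where for a positive integer $m$ $$Q_m=\begin{pmatrix} I_m-\frac1m J_m & \frac1m J_m\\ \frac1m J_m & I_m-\frac1m J_m\end{pmatrix}\in M_{2m}(\mathbb{C}G).$$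
   Context: $\mathbb{C}G$ denotes the complex group algebra of $G$, with neutral element $1_G$; $M_{a,b}(\mathbb{C}G)$ is the set of $a\times b$ matrices with entries in $\mathbb{C}G$. $I_m\in M_m(\mathbb{C}G)$ is the identity matrix (diagonal entries $1_G$), and $J_m\in M_m(\mathbb{C}G)$ is the matrix all of whose entries are $1_G$. "Constant row sum $r$" means every row of the block sums (in $\mathbb{C}G$) to $r$; similarly for column sums. *)

theory Defs
  imports "HOL-Library.Poly_Mapping" "Jordan_Normal_Form.Matrix"
begin

text \<open>The group is a type of class group_add
  (written additively, NOT assumed commutative; neutral element 0). Elements of CG are
  finitely supported functions G => complex; multiplication of poly_mapping is the
  convolution (f*g)(x) = sum over a+b=x of f a * g b, i.e. the group algebra product.\<close>

type_synonym 'g group_alg = "'g \<Rightarrow>\<^sub>0 complex"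

definition scal :: "complex \<Rightarrow> ('g::group_add) group_alg" where
  "scal c = Poly_Mapping.single 0 c"

definition Jmat :: "nat \<Rightarrow> ('g::group_add) group_alg mat" where
  "Jmat m = mat m m (\<lambda>_. 1)"

definition Qmat :: "nat \<Rightarrow> ('g::group_add) group_alg mat" where
  "Qmat m = four_block_mat
     (1\<^sub>m m - scal (1 / of_nat m) \<cdot>\<^sub>m Jmat m) (scal (1 / of_nat m) \<cdot>\<^sub>m Jmat m)
     (scal (1 / of_nat m) \<cdot>\<^sub>m Jmat m) (1\<^sub>m m - scal (1 / of_nat m) \<cdot>\<^sub>m Jmat m)"

definition const_row_sum :: "'a::comm_monoid_add mat \<Rightarrow> 'a \<Rightarrow> bool" where
  "const_row_sum B r \<longleftrightarrow> (\<forall>i < dim_row B. (\<Sum>j < dim_col B. B $$ (i, j)) = r)"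

definition const_col_sum :: "'a::comm_monoid_add mat \<Rightarrow> 'a \<Rightarrow> bool" where
  "const_col_sum B c \<longleftrightarrow> (\<forall>j < dim_col B. (\<Sum>i < dim_row B. B $$ (i, j)) = c)"

end

theory Submission imports Defs begin
lemma colsum_left:
  fixes B :: "('g::group_add) group_alg mat"
  assumes B: "B \<in> carrier_mat p q" and cs: "const_col_sum B c"
  shows "(1\<^sub>m p - s \<cdot>\<^sub>m Jmat p) * B = mat p q (\<lambda>(i,j). B $$ (i,j) - s * c)"
    and "(s \<cdot>\<^sub>m Jmat p) * B = mat p q (\<lambda>_. s * c)"
proof -
  have csj: "(\<Sum>k<p. B $$ (k, j)) = c" if "j < q" for j
    using cs B that by (auto simp: const_col_sum_def)
  show "(1\<^sub>m p - s \<cdot>\<^sub>m Jmat p) * B = mat p q (\<lambda>(i,j). B $$ (i,j) - s * c)"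
  proof (rule eq_matI)
    fix i j assume i: "i < dim_row (mat p q (\<lambda>(i,j). B $$ (i,j) - s * c))"
      and j: "j < dim_col (mat p q (\<lambda>(i,j). B $$ (i,j) - s * c))"
    hence i: "i < p" and j: "j < q" by auto
    have "((1\<^sub>m p - s \<cdot>\<^sub>m Jmat p) * B) $$ (i,j) = (\<Sum>k<p. ((if i = k then 1 else 0) - s) * B $$ (k,j))"
      using i j B by (simp add: scalar_prod_def Jmat_def lessThan_atLeast0 row_def col_def)
    also have "\<dots> = (\<Sum>k<p. (if i = k then 1 else 0) * B $$ (k,j) - s * B $$ (k,j))"
      by (simp only: left_diff_distrib)
    also have "\<dots> = (\<Sum>k<p. (if i = k then 1 else 0) * B $$ (k,j)) - s * (\<Sum>k<p. B $$ (k,j))"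
      by (simp only: sum_subtractf sum_distrib_left)
    also have "\<dots> = B $$ (i,j) - s * c" using i j csj by (simp add: if_distrib[of "\<lambda>x. x * _"] cong: if_cong)
    finally show "((1\<^sub>m p - s \<cdot>\<^sub>m Jmat p) * B) $$ (i,j) = mat p q (\<lambda>(i,j). B $$ (i,j) - s * c) $$ (i,j)"
      using i j by simp
  qed (use B in \<open>auto simp: Jmat_def\<close>)
  show "(s \<cdot>\<^sub>m Jmat p) * B = mat p q (\<lambda>_. s * c)"
  proof (rule eq_matI)
    fix i j assume i: "i < dim_row (mat p q (\<lambda>_. s * c))"
      and j: "j < dim_col (mat p q (\<lambda>_. s * c))"
    hence i: "i < p" and j: "j < q" by auto
    have "((s \<cdot>\<^sub>m Jmat p) * B) $$ (i,j) = (\<Sum>k<p. s * B $$ (k,j))"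
      using i j B by (simp add: scalar_prod_def Jmat_def lessThan_atLeast0 row_def col_def)
    also have "\<dots> = s * c" using j csj by (simp add: sum_distrib_left[symmetric])
    finally show "((s \<cdot>\<^sub>m Jmat p) * B) $$ (i,j) = mat p q (\<lambda>_. s * c) $$ (i,j)"
      using i j by simp
  qed (use B in \<open>auto simp: Jmat_def\<close>)
qed

lemma rowsum_right:
  fixes B :: "('g::group_add) group_alg mat"
  assumes B: "B \<in> carrier_mat p q" and rs: "const_row_sum B r"
  shows "B * (1\<^sub>m q - t \<cdot>\<^sub>m Jmat q) = mat p q (\<lambda>(i,j). B $$ (i,j) - r * t)"
    and "B * (t \<cdot>\<^sub>m Jmat q) = mat p q (\<lambda>_. r * t)"
proof -
  have rsi: "(\<Sum>k<q. B $$ (i, k)) = r" if "i < p" for i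
    using rs B that by (auto simp: const_row_sum_def)
  show "B * (1\<^sub>m q - t \<cdot>\<^sub>m Jmat q) = mat p q (\<lambda>(i,j). B $$ (i,j) - r * t)"
  proof (rule eq_matI)
    fix i j assume i: "i < dim_row (mat p q (\<lambda>(i,j). B $$ (i,j) - r * t))"
      and j: "j < dim_col (mat p q (\<lambda>(i,j). B $$ (i,j) - r * t))"
    hence i: "i < p" and j: "j < q" by auto
    have "(B * (1\<^sub>m q - t \<cdot>\<^sub>m Jmat q)) $$ (i,j) = (\<Sum>k<q. B $$ (i,k) * ((if k = j then 1 else 0) - t))"
      using i j B by (simp add: scalar_prod_def Jmat_def lessThan_atLeast0 row_def col_def)
    also have "\<dots> = (\<Sum>k<q. B $$ (i,k) * (if k = j then 1 else 0) - B $$ (i,k) * t)"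
      by (simp only: right_diff_distrib)
    also have "\<dots> = (\<Sum>k<q. B $$ (i,k) * (if k = j then 1 else 0)) - (\<Sum>k<q. B $$ (i,k)) * t"
      by (simp only: sum_subtractf sum_distrib_right)
    also have "\<dots> = B $$ (i,j) - r * t" using i j rsi by (simp add: if_distrib[of "\<lambda>x. _ * x"] cong: if_cong)
    finally show "(B * (1\<^sub>m q - t \<cdot>\<^sub>m Jmat q)) $$ (i,j) = mat p q (\<lambda>(i,j). B $$ (i,j) - r * t) $$ (i,j)"
      using i j by simp
  qed (use B in \<open>auto simp: Jmat_def\<close>)
  show "B * (t \<cdot>\<^sub>m Jmat q) = mat p q (\<lambda>_. r * t)"
  proof (rule eq_matI)
    fix i j assume i: "i < dim_row (mat p q (\<lambda>_. r * t))"
      and j: "j < dim_col (mat p q (\<lambda>_. r * t))"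
    hence i: "i < p" and j: "j < q" by auto
    have "(B * (t \<cdot>\<^sub>m Jmat q)) $$ (i,j) = (\<Sum>k<q. B $$ (i,k) * t)"
      using i j B by (simp add: scalar_prod_def Jmat_def lessThan_atLeast0 row_def col_def)
    also have "\<dots> = r * t" using i rsi by (simp add: sum_distrib_right[symmetric])
    finally show "(B * (t \<cdot>\<^sub>m Jmat q)) $$ (i,j) = mat p q (\<lambda>_. r * t) $$ (i,j)"
      using i j by simp
  qed (use B in \<open>auto simp: Jmat_def\<close>)
qed
lemma scal_comm: fixes x :: "('g::group_add) group_alg" shows "scal c * x = x * scal c"
proof -
  have "Poly_Mapping.lookup (x * scal c) k = Poly_Mapping.lookup (scal c * x) k" for k
  proof -
    have inner: "(Sum_any (\<lambda>q. (c when 0 = q) when k = l + q)) = (c when k = l)" for l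
    proof -
      have "(\<lambda>q. (c when 0 = q) when k = l + q) = (\<lambda>q. if q = 0 then (c when k = l) else 0)"
        by (auto simp: when_def fun_eq_iff)
      then show ?thesis by (simp only: Sum_any.delta)
    qed
    have "Poly_Mapping.lookup (x * scal c) k = Sum_any (\<lambda>l. Poly_Mapping.lookup x l * Sum_any (\<lambda>q. (c when 0 = q) when k = l + q))"
      by (simp add: lookup_mult scal_def lookup_single)
    also have "\<dots> = Sum_any (\<lambda>l. if l = k then Poly_Mapping.lookup x k * c else 0)"
      unfolding inner by (rule Sum_any.cong) (auto simp add: when_def)
    also have "\<dots> = Poly_Mapping.lookup x k * c"
      by simp
    finally show ?thesis
      by (simp add: scal_def mult_map_scale_conv_mult[symmetric] map.rep_eq when_def mult.commute)
  qed
  then show ?thesis by (metis poly_mapping_eqI)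
qed
lemma left_comb:
  fixes B B' :: "('g::group_add) group_alg mat"
  assumes B: "B \<in> carrier_mat p q" "B' \<in> carrier_mat p q"
    and cs: "const_col_sum B c" "const_col_sum B' c'"
  shows "(1\<^sub>m p - s \<cdot>\<^sub>m Jmat p) * B + (s \<cdot>\<^sub>m Jmat p) * B' = mat p q (\<lambda>(i,j). B $$ (i,j) + (s * c' - s * c))"
    and "(s \<cdot>\<^sub>m Jmat p) * B + (1\<^sub>m p - s \<cdot>\<^sub>m Jmat p) * B' = mat p q (\<lambda>(i,j). B' $$ (i,j) + (s * c - s * c'))"
  unfolding colsum_left[OF B(1) cs(1)] colsum_left[OF B(2) cs(2)]
  by (auto intro!: eq_matI simp: algebra_simps)

lemma right_comb:
  fixes B B' :: "('g::group_add) group_alg mat"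
  assumes B: "B \<in> carrier_mat p q" "B' \<in> carrier_mat p q"
    and rs: "const_row_sum B r" "const_row_sum B' r'"
  shows "B * (1\<^sub>m q - t \<cdot>\<^sub>m Jmat q) + B' * (t \<cdot>\<^sub>m Jmat q) = mat p q (\<lambda>(i,j). B $$ (i,j) + (r' * t - r * t))"
    and "B * (t \<cdot>\<^sub>m Jmat q) + B' * (1\<^sub>m q - t \<cdot>\<^sub>m Jmat q) = mat p q (\<lambda>(i,j). B' $$ (i,j) + (r * t - r' * t))"
  unfolding rowsum_right[OF B(1) rs(1)] rowsum_right[OF B(2) rs(2)]
  by (auto intro!: eq_matI simp: algebra_simps)

lemma rowsum_shift:
  fixes B :: "('g::group_add) group_alg mat"
  assumes B: "B \<in> carrier_mat p q" and rs: "const_row_sum B r"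
  shows "const_row_sum (mat p q (\<lambda>(i,j). B $$ (i,j) + y)) (r + of_nat q * y)"
  using assms by (auto simp: const_row_sum_def sum.distrib)

lemma total_sum:
  fixes B :: "('g::group_add) group_alg mat"
  assumes B: "B \<in> carrier_mat p q" and rs: "const_row_sum B r" and cs: "const_col_sum B c"
  shows "of_nat p * r = of_nat q * c"
proof -
  have "of_nat p * r = (\<Sum>i<p. \<Sum>j<q. B $$ (i,j))" using assms by (simp add: const_row_sum_def)
  also have "\<dots> = (\<Sum>j<q. \<Sum>i<p. B $$ (i,j))" by (rule sum.swap)
  also have "\<dots> = of_nat q * c" using assms by (simp add: const_col_sum_def)
  finally show ?thesis .
qed

lemma scal_mult: "scal a * scal b = (scal (a * b) :: ('g::group_add) group_alg)"
  by (simp add: scal_def mult_single)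

lemma scal_of_nat: "scal (of_nat n) = (of_nat n :: ('g::group_add) group_alg)"
  by (simp add: scal_def)

lemma scal_inv:
  assumes "n \<ge> 1"
  shows "(of_nat n :: ('g::group_add) group_alg) * scal (1 / of_nat n) = 1"
proof -
  have "(of_nat n :: 'g group_alg) * scal (1 / of_nat n) = scal (of_nat n * (1 / of_nat n))"
    by (simp add: scal_mult scal_of_nat[symmetric])
  also have "\<dots> = scal 1" using assms by simp
  finally show ?thesis by (simp add: scal_def)
qed

lemma key:
  fixes r c :: "('g::group_add) group_alg"
  assumes "p \<ge> 1" "q \<ge> 1" "of_nat p * r = of_nat q * c"
  shows "r * scal (1 / of_nat q) = scal (1 / of_nat p) * c"
proof -
  let ?s = "scal (1 / of_nat p) :: 'g group_alg" and ?t = "scal (1 / of_nat q) :: 'g group_alg"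
  have "r * ?t = ?t * r" by (simp add: scal_comm)
  also have "\<dots> = ?t * (?s * of_nat p) * r"
  proof -
    have h: "?s * of_nat p = 1" using scal_inv[OF assms(1)] by (simp add: mult_of_nat_commute)
    show ?thesis by (simp only: h mult_1_right)
  qed
  also have "\<dots> = ?t * ?s * (of_nat p * r)" by (simp add: mult.assoc)
  also have "\<dots> = ?t * ?s * (of_nat q * c)" using assms by simp
  also have "\<dots> = ?s * (of_nat q * ?t) * c" by (simp add: mult.assoc scal_comm[of "1 / of_nat q"])
  also have "\<dots> = ?s * c"
  proof -
    have h: "of_nat q * ?t = 1" using scal_inv[OF assms(2)] by simp
    show ?thesis by (simp only: h mult_1_right)
  qed
  finally show ?thesis .
qed

theorem mainTheorem1:
  fixes p q :: nat
    and A A11 A12 A21 A22 :: "('g::group_add) group_alg mat"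
    and r1 r2 c1 c2 :: "'g group_alg"
  assumes "p \<ge> 1" and "q \<ge> 1"
    and "A11 \<in> carrier_mat p q" and "A12 \<in> carrier_mat p q"
    and "A21 \<in> carrier_mat p q" and "A22 \<in> carrier_mat p q"
    and "A = four_block_mat A11 A12 A21 A22"
    and "const_row_sum A11 r1" and "const_row_sum A22 r1"
    and "const_col_sum A11 c1" and "const_col_sum A22 c1"
    and "const_row_sum A12 r2" and "const_row_sum A21 r2"
    and "const_col_sum A12 c2" and "const_col_sum A21 c2"
  shows "Qmat p * A * Qmat q = A"
proof -
  let ?s = "scal (1 / of_nat p) :: 'g group_alg" and ?t = "scal (1 / of_nat q) :: 'g group_alg"
  define x where "x = ?s * c2 - ?s * c1"
  define y where "y = ?s * c1 - ?s * c2"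
  have Jp: "Jmat p \<in> carrier_mat p p" and Jq: "Jmat q \<in> carrier_mat q q" by (auto simp: Jmat_def)
  have cp: "1\<^sub>m p - ?s \<cdot>\<^sub>m Jmat p \<in> carrier_mat p p" "?s \<cdot>\<^sub>m Jmat p \<in> carrier_mat p p"
    unfolding Jmat_def carrier_mat_def by auto
  have cq: "1\<^sub>m q - ?t \<cdot>\<^sub>m Jmat q \<in> carrier_mat q q" "?t \<cdot>\<^sub>m Jmat q \<in> carrier_mat q q"
    unfolding Jmat_def carrier_mat_def by auto
  define P11 where "P11 = mat p q (\<lambda>(i,j). A11 $$ (i,j) + x)"
  define P12 where "P12 = mat p q (\<lambda>(i,j). A12 $$ (i,j) + y)"
  define P21 where "P21 = mat p q (\<lambda>(i,j). A21 $$ (i,j) + y)"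
  define P22 where "P22 = mat p q (\<lambda>(i,j). A22 $$ (i,j) + x)"
  have QA: "Qmat p * A = four_block_mat P11 P12 P21 P22"
    unfolding Qmat_def assms(7)
    apply (subst mult_four_block_mat[OF cp(1) cp(2) cp(2) cp(1) assms(3-6)])
    unfolding left_comb[OF assms(3) assms(5) assms(10) assms(15)]
      left_comb[OF assms(4) assms(6) assms(14) assms(11)]
    by (simp add: P11_def P12_def P21_def P22_def x_def y_def)
  have Pc: "P11 \<in> carrier_mat p q" "P12 \<in> carrier_mat p q" "P21 \<in> carrier_mat p q" "P22 \<in> carrier_mat p q"
    by (auto simp: P11_def P12_def P21_def P22_def)
  have Pr: "const_row_sum P11 (r1 + of_nat q * x)" "const_row_sum P12 (r2 + of_nat q * y)"
    "const_row_sum P21 (r2 + of_nat q * y)" "const_row_sum P22 (r1 + of_nat q * x)"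
    unfolding P11_def P12_def P21_def P22_def
    by (rule rowsum_shift, use assms in auto)+
  have k1: "r1 * ?t = ?s * c1" by (rule key) (use assms total_sum in auto)
  have k2: "r2 * ?t = ?s * c2" by (rule key) (use assms total_sum in auto)
  have xt: "of_nat q * x * ?t = x"
    using scal_inv[OF assms(2)] by (metis mult.assoc mult_of_nat_commute scal_comm mult_1_right)
  have e1: "(r2 + of_nat q * y) * ?t - (r1 + of_nat q * x) * ?t = y"
    using k1 k2 xt unfolding x_def y_def by (simp add: algebra_simps)
  have e2: "(r1 + of_nat q * x) * ?t - (r2 + of_nat q * y) * ?t = x"
    using k1 k2 xt unfolding x_def y_def by (simp add: algebra_simps)
  show ?thesis
    unfolding QA unfolding Qmat_def
    apply (subst mult_four_block_mat[OF Pc cq(1) cq(2) cq(2) cq(1)])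
    apply (simp add: right_comb[OF Pc(1,2) Pr(1,2)] right_comb[OF Pc(3,4) Pr(3,4)] e1 e2 assms(7))
    apply (intro cong_four_block_mat eq_matI)
    using assms(3-6) by (auto simp: P11_def P12_def P21_def P22_def x_def y_def)
qed
end
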